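(* Let $G$ be a connected cubic graph of order $n\geq 6$ with $\alpha(G)=\frac{3}{5}\,\mathrm{diss}(G)$. Then $n$ is divisible by $18$, $\alpha(G)=\frac{n}{3}$, $\mathrm{diss}(G)=\frac{5n}{9}$, and for every maximum dissociation set $D$ of $G$, every component of $G[D]$ has exactly two vertices (i.e. $G[D]$ has no isolated vertices).
   Context: All graphs are finite, simple and undirected. $\alpha(G)$ denotes the independence number of $G$. A set $D$ of vertices of $G$ is a dissociation set if the subgraph $G[D]$ induced by $D$ has maximum degree at most $1$; the dissociation number $\mathrm{diss}(G)$ is the maximum order of a dissociation set in $G$; a maximum dissociation set is a dissociation set of order $\mathrm{diss}(G)$. *)

theory Defs
  imports Main
begin

definition simple_graph :: "'a set \<Rightarrow> ('a \<Rightarrow> 'a \<Rightarrow> bool) \<Rightarrow> bool" where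
  "simple_graph V E \<longleftrightarrow> finite V \<and> (\<forall>x y. E x y \<longrightarrow> x \<in> V \<and> y \<in> V)
     \<and> (\<forall>x y. E x y \<longrightarrow> E y x) \<and> (\<forall>x. \<not> E x x)"

definition neighbors :: "'a set \<Rightarrow> ('a \<Rightarrow> 'a \<Rightarrow> bool) \<Rightarrow> 'a \<Rightarrow> 'a set" where
  "neighbors V E v = {u \<in> V. E v u}"

definition cubic :: "'a set \<Rightarrow> ('a \<Rightarrow> 'a \<Rightarrow> bool) \<Rightarrow> bool" where
  "cubic V E \<longleftrightarrow> (\<forall>v\<in>V. card (neighbors V E v) = 3)"

definition connected_graph :: "'a set \<Rightarrow> ('a \<Rightarrow> 'a \<Rightarrow> bool) \<Rightarrow> bool" where
  "connected_graph V E \<longleftrightarrow> V \<noteq> {} \<and>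
     (\<forall>u\<in>V. \<forall>v\<in>V. (\<lambda>x y. x \<in> V \<and> y \<in> V \<and> E x y)\<^sup>*\<^sup>* u v)"

definition independent_set :: "'a set \<Rightarrow> ('a \<Rightarrow> 'a \<Rightarrow> bool) \<Rightarrow> 'a set \<Rightarrow> bool" where
  "independent_set V E S \<longleftrightarrow> S \<subseteq> V \<and> (\<forall>x\<in>S. \<forall>y\<in>S. \<not> E x y)"

definition independence_number :: "'a set \<Rightarrow> ('a \<Rightarrow> 'a \<Rightarrow> bool) \<Rightarrow> nat" where
  "independence_number V E = Max (card ` {S. independent_set V E S})"

definition dissociation_set :: "'a set \<Rightarrow> ('a \<Rightarrow> 'a \<Rightarrow> bool) \<Rightarrow> 'a set \<Rightarrow> bool" where
  "dissociation_set V E D \<longleftrightarrow> D \<subseteq> V \<and> (\<forall>x\<in>D. card {y \<in> D. E x y} \<le> 1)"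

definition diss :: "'a set \<Rightarrow> ('a \<Rightarrow> 'a \<Rightarrow> bool) \<Rightarrow> nat" where
  "diss V E = Max (card ` {D. dissociation_set V E D})"

definition max_dissociation_set :: "'a set \<Rightarrow> ('a \<Rightarrow> 'a \<Rightarrow> bool) \<Rightarrow> 'a set \<Rightarrow> bool" where
  "max_dissociation_set V E D \<longleftrightarrow> dissociation_set V E D \<and> card D = diss V E"

end

theory Submission
  imports Defs
begin



definition dg :: "'a set \<Rightarrow> ('a \<Rightarrow> 'a \<Rightarrow> bool) \<Rightarrow> 'a \<Rightarrow> nat" where
  "dg U E v = card {u\<in>U. E v u}"
definition clsd :: "'a set \<Rightarrow> ('a \<Rightarrow> 'a \<Rightarrow> bool) \<Rightarrow> 'a set \<Rightarrow> bool" where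
  "clsd U E S \<longleftrightarrow> S \<subseteq> U \<and> (\<forall>s\<in>S. \<forall>u\<in>U. E s u \<longrightarrow> u \<in> S)"
definition col3 :: "'a set \<Rightarrow> ('a \<Rightarrow> 'a \<Rightarrow> bool) \<Rightarrow> ('a \<Rightarrow> nat) \<Rightarrow> bool" where
  "col3 U E c \<longleftrightarrow> (\<forall>v\<in>U. c v < 3) \<and> (\<forall>u\<in>U. \<forall>v\<in>U. E u v \<longrightarrow> c u \<noteq> c v)"
definition isK4 :: "('a \<Rightarrow> 'a \<Rightarrow> bool) \<Rightarrow> 'a set \<Rightarrow> bool" where
  "isK4 E S \<longleftrightarrow> card S = 4 \<and> (\<forall>a\<in>S. \<forall>b\<in>S. a \<noteq> b \<longrightarrow> E a b)"
definition symirr :: "('a \<Rightarrow> 'a \<Rightarrow> bool) \<Rightarrow> bool" where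
  "symirr E \<longleftrightarrow> (\<forall>a b. E a b \<longrightarrow> E b a) \<and> (\<forall>a. \<not> E a a)"
definition conn :: "'a set \<Rightarrow> ('a \<Rightarrow> 'a \<Rightarrow> bool) \<Rightarrow> bool" where
  "conn U E \<longleftrightarrow> (\<forall>S. clsd U E S \<longrightarrow> S \<noteq> {} \<longrightarrow> S = U)"

lemma free_color:
  fixes F :: "nat set"
  assumes "finite F" "card F \<le> 2"
  shows "\<exists>k<3. k \<notin> F"
proof (rule ccontr)
  assume "\<not> ?thesis"
  then have "{0,1,2} \<subseteq> F" by auto
  then have "card {0::nat,1,2} \<le> card F" using assms(1) by (rule card_mono[rotated])
  then show False using assms(2) by simp
qed

lemma greedy:
  fixes c0 :: "'a \<Rightarrow> nat"
  assumes "finite W" "finite P" "W \<inter> P = {}" "\<forall>v\<in>P. c0 v < 3" "symirr E"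
    "\<forall>S\<subseteq>W. S \<noteq> {} \<longrightarrow> (\<exists>w\<in>S. card {u\<in>S. E w u} + card (c0 ` {u\<in>P. E w u}) \<le> 2)"
  shows "\<exists>c. (\<forall>v\<in>P. c v = c0 v) \<and> (\<forall>v\<in>W. c v < 3) \<and> (\<forall>u\<in>W. \<forall>v\<in>W \<union> P. E u v \<longrightarrow> c u \<noteq> c v)"
  using assms
proof (induction W rule: finite_remove_induct)
  case empty
  then show ?case by (intro exI[of _ c0]) auto
next
  case (remove W)
  from remove.prems(5) remove.hyps(2) obtain w where w: "w \<in> W"
    "card {u\<in>W. E w u} + card (c0 ` {u\<in>P. E w u}) \<le> 2" by blast
  have "\<exists>c. (\<forall>v\<in>P. c v = c0 v) \<and> (\<forall>v\<in>W - {w}. c v < 3) \<and> (\<forall>u\<in>W - {w}. \<forall>v\<in>(W - {w}) \<union> P. E u v \<longrightarrow> c u \<noteq> c v)"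
    using remove.IH[OF w(1)] remove.prems by blast
  then obtain c where c: "\<forall>v\<in>P. c v = c0 v" "\<forall>v\<in>W - {w}. c v < 3"
    "\<forall>u\<in>W - {w}. \<forall>v\<in>(W - {w}) \<union> P. E u v \<longrightarrow> c u \<noteq> c v" by blast
  define F where "F = c ` {u\<in>W - {w}. E w u} \<union> c0 ` {u\<in>P. E w u}"
  have fin: "finite F" unfolding F_def using remove.hyps(1) remove.prems(1) by auto
  have "card F \<le> card (c ` {u\<in>W - {w}. E w u}) + card (c0 ` {u\<in>P. E w u})"
    unfolding F_def by (rule card_Un_le)
  also have "card (c ` {u\<in>W - {w}. E w u}) \<le> card {u\<in>W - {w}. E w u}"
    by (rule card_image_le) (use remove.hyps(1) in auto)
  also have "card {u\<in>W - {w}. E w u} \<le> card {u\<in>W. E w u}"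
    by (rule card_mono) (use remove.hyps(1) in auto)
  finally have "card F \<le> 2" using w(2) by linarith
  then obtain k where k: "k < 3" "k \<notin> F" using free_color[OF fin] by blast
  have sym: "\<And>a b. E a b \<Longrightarrow> E b a" and irr: "\<And>a. \<not> E a a"
    using remove.prems(4) unfolding symirr_def by auto
  have wP: "w \<notin> P" using remove.prems(2) w(1) by auto
  show ?case
  proof (intro exI[of _ "c(w := k)"] conjI ballI impI)
    fix v assume "v \<in> P" then show "(c(w := k)) v = c0 v" using c(1) wP by auto
  next
    fix v assume "v \<in> W" then show "(c(w := k)) v < 3" using c(2) k by auto
  next
    fix u v assume uv: "u \<in> W" "v \<in> W \<union> P" "E u v"
    show "(c(w := k)) u \<noteq> (c(w := k)) v"
    proof (cases "u = w")
      case True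
      then have "v \<noteq> w" using irr uv(3) by auto
      then have "c v \<in> F" using uv True c(1) unfolding F_def by auto
      then show ?thesis using True \<open>v \<noteq> w\<close> k by auto
    next
      case False
      show ?thesis
      proof (cases "v = w")
        case True
        then have "c u \<in> F" using uv False sym unfolding F_def by auto
        then show ?thesis using True False k by auto
      next
        case False2: False
        then show ?thesis using c(3) uv False by auto
      qed
    qed
  qed
qed


lemma degen_col:
  assumes "finite U" "symirr E" "\<forall>v\<in>U. dg U E v \<le> 3"
    "\<forall>S. clsd U E S \<longrightarrow> S \<noteq> {} \<longrightarrow> (\<exists>w\<in>S. dg U E w \<le> 2)"
  shows "\<exists>c. col3 U E c"
proof -
  have "\<exists>c. (\<forall>v\<in>{}. c v = (\<lambda>_. 0::nat) v) \<and> (\<forall>v\<in>U. c v < 3) \<and> (\<forall>u\<in>U. \<forall>v\<in>U \<union> {}. E u v \<longrightarrow> c u \<noteq> c v)"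
  proof (rule greedy)
    show "\<forall>S\<subseteq>U. S \<noteq> {} \<longrightarrow> (\<exists>w\<in>S. card {u\<in>S. E w u} + card ((\<lambda>_. 0::nat) ` {u\<in>{}. E w u}) \<le> 2)"
    proof (intro allI impI)
      fix S assume S: "S \<subseteq> U" "S \<noteq> {}"
      show "\<exists>w\<in>S. card {u\<in>S. E w u} + card ((\<lambda>_. 0::nat) ` {u\<in>{}. E w u}) \<le> 2"
      proof (cases "clsd U E S")
        case True
        then obtain w where w: "w \<in> S" "dg U E w \<le> 2" using assms(4) S by blast
        have "card {u\<in>S. E w u} \<le> card {u\<in>U. E w u}"
          by (rule card_mono) (use assms(1) S in auto)
        then have "card {u\<in>S. E w u} \<le> 2" using w unfolding dg_def by auto
        then show ?thesis using w(1) by auto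
      next
        case False
        then obtain s u where su: "s \<in> S" "u \<in> U" "E s u" "u \<notin> S" using S unfolding clsd_def by blast
        have "{u\<in>S. E s u} \<subset> {u\<in>U. E s u}" using su S by auto
        then have "card {u\<in>S. E s u} < card {u\<in>U. E s u}"
          by (rule psubset_card_mono[rotated]) (use assms(1) in auto)
        then show ?thesis using su(1) assms(3) S unfolding dg_def by force
      qed
    qed
  qed (use assms in auto)
  then show ?thesis unfolding col3_def by auto
qed

lemma sub_col:
  assumes "finite V" "symirr E" "\<forall>v\<in>V. dg V E v \<le> 3" "conn V E" "U \<subseteq> V" "U \<noteq> V"
  shows "\<exists>c. col3 U E c"
proof (rule degen_col)
  show "finite U" using assms finite_subset by blast
  show "\<forall>v\<in>U. dg U E v \<le> 3"
  proof
    fix v assume "v \<in> U"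
    have "dg U E v \<le> dg V E v" unfolding dg_def
      by (rule card_mono) (use assms in auto)
    then show "dg U E v \<le> 3" using assms(3,5) \<open>v\<in>U\<close> by force
  qed
  show "\<forall>S. clsd U E S \<longrightarrow> S \<noteq> {} \<longrightarrow> (\<exists>w\<in>S. dg U E w \<le> 2)"
  proof (intro allI impI, rule ccontr)
    fix S assume S: "clsd U E S" "S \<noteq> {}" "\<not> (\<exists>w\<in>S. dg U E w \<le> 2)"
    have "clsd V E S" unfolding clsd_def
    proof (intro conjI ballI impI)
      show "S \<subseteq> V" using S(1) assms(5) unfolding clsd_def by auto
    next
      fix s u assume su: "s \<in> S" "u \<in> V" "E s u"
      have sU: "s \<in> U" using S(1) su unfolding clsd_def by auto
      have sub: "{u\<in>U. E s u} \<subseteq> {u\<in>V. E s u}" using assms(5) by auto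
      have "card {u\<in>V. E s u} \<le> card {u\<in>U. E s u}"
        using S(3) su(1) assms(3) sU assms(5) unfolding dg_def by force
      then have "{u\<in>U. E s u} = {u\<in>V. E s u}"
        using card_seteq[OF _ sub] assms(1) by auto
      then have "u \<in> U" using su by auto
      then show "u \<in> S" using S(1) su unfolding clsd_def by auto
    qed
    then have "S = V" using assms(4) S(2) unfolding conn_def by auto
    then show False using S(1) assms(5,6) unfolding clsd_def by auto
  qed
qed (use assms in auto)





definition third :: "nat \<Rightarrow> nat \<Rightarrow> nat" where
  "third a b = (if a \<noteq> 0 \<and> b \<noteq> 0 then 0 else if a \<noteq> 1 \<and> b \<noteq> 1 then 1 else 2)"

lemma glue_gen:
  assumes "col3 U1 E c1" "col3 U2 E c2" "inj_on f {0,1,2}" "\<forall>k<3. f k < (3::nat)"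
    "\<forall>v\<in>U1 \<inter> U2. c1 v = f (c2 v)"
    "\<forall>u\<in>U1 - U2. \<forall>v\<in>U2 - U1. \<not> E u v \<and> \<not> E v u"
  shows "\<exists>c. col3 (U1 \<union> U2) E c"
proof -
  define c where "c v = (if v \<in> U1 then c1 v else f (c2 v))" for v
  have c2v: "c v = f (c2 v)" if "v \<in> U2" for v using assms(5) that unfolding c_def by auto
  have fi: "f a \<noteq> f b" if "a < 3" "b < 3" "a \<noteq> b" for a b
  proof -
    have "a \<in> {0,1,2}" "b \<in> {0,1,2}" using that by auto
    then show ?thesis using inj_onD[OF assms(3)] that(3) by metis
  qed
  show ?thesis
  proof (intro exI[of _ c], unfold col3_def, intro conjI ballI impI)
    fix v assume "v \<in> U1 \<union> U2"
    then show "c v < 3" using assms(1,2,4) unfolding c_def col3_def by auto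
  next
    fix u v assume uv: "u \<in> U1 \<union> U2" "v \<in> U1 \<union> U2" "E u v"
    show "c u \<noteq> c v"
    proof (cases "u \<in> U1 \<and> v \<in> U1")
      case True
      then have "c1 u \<noteq> c1 v" using assms(1) uv(3) unfolding col3_def by auto
      then show ?thesis using True unfolding c_def by auto
    next
      case False
      have uv2: "u \<in> U2 \<and> v \<in> U2"
      proof (rule ccontr)
        assume "\<not> (u \<in> U2 \<and> v \<in> U2)"
        then have "(u \<in> U1 - U2 \<and> v \<in> U2 - U1) \<or> (v \<in> U1 - U2 \<and> u \<in> U2 - U1)"
          using False uv(1,2) by auto
        then show False using assms(6) uv(3) by auto
      qed
      then have "c2 u \<noteq> c2 v" "c2 u < 3" "c2 v < 3" using assms(2) uv(3) uv2 unfolding col3_def by auto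
      then show ?thesis using c2v uv2 fi by auto
    qed
  qed
qed

lemma glue1:
  assumes "col3 U1 E c1" "col3 U2 E c2" "U1 \<inter> U2 = {p}"
    "\<forall>u\<in>U1 - U2. \<forall>v\<in>U2 - U1. \<not> E u v \<and> \<not> E v u"
  shows "\<exists>c. col3 (U1 \<union> U2) E c"
proof (rule glue_gen[OF assms(1,2), where f = "\<lambda>k. if k = c2 p then c1 p else if k = c1 p then c2 p else k"])
  have p: "c1 p < 3" "c2 p < 3" using assms unfolding col3_def by auto
  show "inj_on (\<lambda>k. if k = c2 p then c1 p else if k = c1 p then c2 p else k) {0, 1, 2}"
    unfolding inj_on_def by auto
  show "\<forall>k<3. (if k = c2 p then c1 p else if k = c1 p then c2 p else k) < 3" using p by auto
  show "\<forall>v\<in>U1 \<inter> U2. c1 v = (if c2 v = c2 p then c1 p else if c2 v = c1 p then c2 p else c2 v)"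
    using assms(3) by auto
qed (use assms in auto)

lemma glue2:
  assumes "col3 U1 E c1" "col3 U2 E c2" "U1 \<inter> U2 = {x,y}" "c1 x \<noteq> c1 y" "c2 x \<noteq> c2 y"
    "\<forall>u\<in>U1 - U2. \<forall>v\<in>U2 - U1. \<not> E u v \<and> \<not> E v u"
  shows "\<exists>c. col3 (U1 \<union> U2) E c"
proof (rule glue_gen[OF assms(1,2), where f = "\<lambda>k. if k = c2 x then c1 x else if k = c2 y then c1 y else third (c1 x) (c1 y)"])
  have p: "c1 x < 3" "c2 x < 3" "c1 y < 3" "c2 y < 3" using assms unfolding col3_def by auto
  show "inj_on (\<lambda>k. if k = c2 x then c1 x else if k = c2 y then c1 y else third (c1 x) (c1 y)) {0, 1, 2}"
    unfolding inj_on_def proof (intro ballI impI)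
    fix a b assume ab: "a \<in> {0::nat,1,2}" "b \<in> {0::nat,1,2}" "(if a = c2 x then c1 x else if a = c2 y then c1 y else third (c1 x) (c1 y)) = (if b = c2 x then c1 x else if b = c2 y then c1 y else third (c1 x) (c1 y))"
    have t: "third (c1 x) (c1 y) \<noteq> c1 x" "third (c1 x) (c1 y) \<noteq> c1 y" unfolding third_def using p assms(4) by auto
    have "c2 x \<in> {0,1,2}" "c2 y \<in> {0,1,2}" using p by auto
    then show "a = b" using ab t assms(4,5) by (auto split: if_splits)
  qed
  show "\<forall>k<3. (if k = c2 x then c1 x else if k = c2 y then c1 y else third (c1 x) (c1 y)) < 3"
    using p unfolding third_def by auto
  show "\<forall>v\<in>U1 \<inter> U2. c1 v = (if c2 v = c2 x then c1 x else if c2 v = c2 y then c1 y else third (c1 x) (c1 y))"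
    using assms(3,5) by auto
qed (use assms in auto)




definition ae :: "('a \<Rightarrow> 'a \<Rightarrow> bool) \<Rightarrow> 'a \<Rightarrow> 'a \<Rightarrow> 'a \<Rightarrow> 'a \<Rightarrow> bool" where
  "ae E x y a b \<longleftrightarrow> E a b \<or> (a = x \<and> b = y) \<or> (a = y \<and> b = x)"

locale cub =
  fixes V :: "'a set" and E :: "'a \<Rightarrow> 'a \<Rightarrow> bool"
  assumes fin: "finite V" and si: "symirr E" and deg3: "\<forall>v\<in>V. dg V E v = 3" and cn: "conn V E"
begin

lemma sym: "E a b \<Longrightarrow> E b a" using si unfolding symirr_def by auto
lemma irr: "\<not> E a a" using si unfolding symirr_def by auto

definition sideset :: "'a \<Rightarrow> 'a \<Rightarrow> 'a set \<Rightarrow> bool" where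
  "sideset x y A \<longleftrightarrow> x \<in> V \<and> y \<in> V \<and> x \<noteq> y \<and> \<not> E x y \<and> A \<subseteq> V - {x,y} \<and>
     (\<forall>a\<in>A. \<forall>u\<in>V. E a u \<longrightarrow> u \<in> A \<union> {x,y})"

lemma ae_symirr: "x \<noteq> y \<Longrightarrow> symirr (ae E x y)"
  using sym irr unfolding symirr_def ae_def by auto

lemma closed_V: "clsd V E S \<Longrightarrow> S \<noteq> {} \<Longrightarrow> S = V" using cn unfolding conn_def by auto

lemma side_closed:
  assumes "sideset x y A" "clsd (A \<union> {x,y}) (ae E x y) T" "T \<noteq> {}"
  shows "x \<in> T \<and> y \<in> T \<and> T = A \<union> {x,y}"
proof -
  have ss: "x \<in> V" "y \<in> V" "x \<noteq> y" "\<not> E x y" "A \<subseteq> V - {x,y}"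
    "\<And>a u. a \<in> A \<Longrightarrow> u \<in> V \<Longrightarrow> E a u \<Longrightarrow> u \<in> A \<union> {x,y}"
    using assms(1) unfolding sideset_def by auto
  have Tsub: "T \<subseteq> A \<union> {x,y}" and Tcl: "\<And>t u. t \<in> T \<Longrightarrow> u \<in> A \<union> {x,y} \<Longrightarrow> ae E x y t u \<Longrightarrow> u \<in> T"
    using assms(2) unfolding clsd_def by auto
  have xy: "x \<in> T \<or> y \<in> T"
  proof (rule ccontr)
    assume nxy: "\<not> (x \<in> T \<or> y \<in> T)"
    then have TA: "T \<subseteq> A" using Tsub by auto
    have "clsd V E T" unfolding clsd_def
    proof (intro conjI ballI impI)
      show "T \<subseteq> V" using TA ss(5) by auto
      fix t u assume tu: "t \<in> T" "u \<in> V" "E t u"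
      then have "u \<in> A \<union> {x,y}" using ss(6) TA by auto
      then show "u \<in> T" using Tcl tu unfolding ae_def by auto
    qed
    then have "T = V" using closed_V assms(3) by auto
    then show False using nxy ss(1) by auto
  qed
  then have xyT: "x \<in> T" "y \<in> T" using Tcl unfolding ae_def by auto
  have "clsd V E (A - T)" unfolding clsd_def
  proof (intro conjI ballI impI)
    show "A - T \<subseteq> V" using ss(5) by auto
    fix w u assume wu: "w \<in> A - T" "u \<in> V" "E w u"
    then have uA: "u \<in> A \<union> {x,y}" using ss(6) by auto
    have "u \<notin> T"
    proof
      assume "u \<in> T"
      then have "w \<in> T" using Tcl[of u w] wu sym unfolding ae_def by auto
      then show False using wu by auto
    qed
    then show "u \<in> A - T" using uA xyT by auto
  qed
  then have "A - T = {}" using closed_V ss(1,5) by blast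
  then show ?thesis using xyT Tsub by auto
qed

lemma nb_x:
  assumes "sideset x y A"
  shows "{u \<in> A \<union> {x,y}. ae E x y x u} = insert y {u\<in>A. E x u}"
    "{u \<in> A \<union> {x,y}. ae E x y y u} = insert x {u\<in>A. E y u}"
  using assms irr unfolding sideset_def ae_def by auto

lemma nb_a:
  assumes "sideset x y A" "a \<in> A"
  shows "{u \<in> A \<union> {x,y}. ae E x y a u} = {u\<in>V. E a u}"
  using assms unfolding sideset_def ae_def by auto

lemma deg_x:
  assumes "sideset x y A"
  shows "dg (A \<union> {x,y}) (ae E x y) x = Suc (card {u\<in>A. E x u})"
    "dg (A \<union> {x,y}) (ae E x y) y = Suc (card {u\<in>A. E y u})"
proof -
  have fA: "finite A" using assms fin unfolding sideset_def by (meson finite_Diff finite_subset)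
  have "y \<notin> {u\<in>A. E x u}" "x \<notin> {u\<in>A. E y u}" using assms unfolding sideset_def by auto
  then show "dg (A \<union> {x,y}) (ae E x y) x = Suc (card {u\<in>A. E x u})"
    "dg (A \<union> {x,y}) (ae E x y) y = Suc (card {u\<in>A. E y u})"
    unfolding dg_def nb_x[OF assms] using fA by auto
qed

lemma deg_a:
  assumes "sideset x y A" "a \<in> A"
  shows "dg (A \<union> {x,y}) (ae E x y) a = 3"
  using nb_a[OF assms] deg3 assms unfolding dg_def sideset_def by auto

lemma side_col:
  assumes "sideset x y A" "card {u\<in>A. E x u} \<le> 2" "card {u\<in>A. E y u} \<le> 2"
    "card {u\<in>A. E x u} \<le> 1 \<or> card {u\<in>A. E y u} \<le> 1"
  shows "\<exists>c. col3 (A \<union> {x,y}) (ae E x y) c"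
proof (rule degen_col)
  show "finite (A \<union> {x, y})" using assms fin unfolding sideset_def by (meson finite_Diff finite_subset finite_Un finite.intros)
  show "symirr (ae E x y)" using ae_symirr assms unfolding sideset_def by auto
  show "\<forall>v\<in>A \<union> {x, y}. dg (A \<union> {x, y}) (ae E x y) v \<le> 3"
    using deg_x[OF assms(1)] deg_a[OF assms(1)] assms(2,3) by auto
  show "\<forall>S. clsd (A \<union> {x, y}) (ae E x y) S \<longrightarrow> S \<noteq> {} \<longrightarrow> (\<exists>w\<in>S. dg (A \<union> {x, y}) (ae E x y) w \<le> 2)"
    using side_closed[OF assms(1)] deg_x[OF assms(1)] assms(4) by fastforce
qed

lemma side_cubic:
  assumes "sideset x y A" "card {u\<in>A. E x u} = 2" "card {u\<in>A. E y u} = 2"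
  shows "\<forall>v\<in>A \<union> {x,y}. dg (A \<union> {x,y}) (ae E x y) v = 3" "conn (A \<union> {x,y}) (ae E x y)"
  using deg_x[OF assms(1)] deg_a[OF assms(1)] assms(2,3) side_closed[OF assms(1)]
  unfolding conn_def by auto

lemma side_K4:
  assumes "sideset x y A" "isK4 (ae E x y) (A \<union> {x,y})"
  shows "\<exists>a b. A = {a,b} \<and> a \<noteq> b \<and> E a b \<and> E x a \<and> E x b \<and> E y a \<and> E y b"
proof -
  have ss: "x \<noteq> y" "x \<notin> A" "y \<notin> A" using assms(1) unfolding sideset_def by auto
  have fA: "finite A" using assms fin unfolding sideset_def by (meson finite_Diff finite_subset)
  have "card (A \<union> {x,y}) = card A + 2" using ss fA by (simp add: card_insert_if)
  then have "card A = 2" using assms(2) unfolding isK4_def by auto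
  then obtain a b where ab: "A = {a,b}" "a \<noteq> b" by (meson card_2_iff)
  have cl: "\<And>p q. p \<in> A \<union> {x,y} \<Longrightarrow> q \<in> A \<union> {x,y} \<Longrightarrow> p \<noteq> q \<Longrightarrow> ae E x y p q"
    using assms(2) unfolding isK4_def by auto
  have "E a b" "E x a" "E x b" "E y a" "E y b"
    using cl[of a b] cl[of x a] cl[of x b] cl[of y a] cl[of y b] ab ss unfolding ae_def by auto
  then show ?thesis using ab by auto
qed

end



context cub begin

lemma diamond:
  assumes sB: "sideset x y B" and V: "V = B \<union> {x,y} \<union> {a,b}" and ab: "a \<notin> B" "b \<notin> B" "a \<noteq> b"
    "a \<noteq> x" "a \<noteq> y" "b \<noteq> x" "b \<noteq> y"
    and e: "E a b" "E x a" "E x b" "E y a" "E y b"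
    and cB: "col3 B E c" and dx: "card {u\<in>B. E x u} \<le> 1" and dy: "card {u\<in>B. E y u} \<le> 1"
  shows "\<exists>c'. col3 V E c'"
proof -
  have ss: "x \<in> V" "y \<in> V" "x \<noteq> y" "\<not> E x y" "B \<subseteq> V - {x,y}"
    using sB unfolding sideset_def by auto
  have fB: "finite B" using fin ss(5) by (meson finite_Diff finite_subset)
  define F where "F = c ` ({u\<in>B. E x u} \<union> {u\<in>B. E y u})"
  have "card F \<le> card ({u\<in>B. E x u} \<union> {u\<in>B. E y u})" unfolding F_def
    by (rule card_image_le) (use fB in auto)
  also have "\<dots> \<le> card {u\<in>B. E x u} + card {u\<in>B. E y u}" by (rule card_Un_le)
  finally have "card F \<le> 2" using dx dy by auto
  moreover have "finite F" unfolding F_def using fB by auto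
  ultimately obtain k where k: "k < 3" "k \<notin> F" using free_color by blast
  have na: "{u\<in>V. E a u} = {x,y,b}"
  proof -
    have sub: "{x,y,b} \<subseteq> {u\<in>V. E a u}" using e sym V by auto
    have "card {x,y,b} = 3" using ss(3) ab by auto
    moreover have "card {u\<in>V. E a u} = 3" using deg3 V unfolding dg_def by auto
    ultimately show ?thesis using card_seteq[OF _ sub] fin by auto
  qed
  have nb: "{u\<in>V. E b u} = {x,y,a}"
  proof -
    have sub: "{x,y,a} \<subseteq> {u\<in>V. E b u}" using e sym V by auto
    have "card {x,y,a} = 3" using ss(3) ab by auto
    moreover have "card {u\<in>V. E b u} = 3" using deg3 V unfolding dg_def by auto
    ultimately show ?thesis using card_seteq[OF _ sub] fin by auto
  qed
  have kk: "(k+1) mod 3 \<noteq> k" "(k+2) mod 3 \<noteq> k" "(k+1) mod 3 \<noteq> (k+2) mod 3" by presburger+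
  define c' where "c' v = (if v = x \<or> v = y then k else if v = a then (k+1) mod 3
     else if v = b then (k+2) mod 3 else c v)" for v
  have cB': "\<And>v. v \<in> B \<Longrightarrow> c' v = c v" unfolding c'_def using ab ss by auto
  show ?thesis
  proof (intro exI[of _ c'], unfold col3_def, intro conjI ballI impI)
    fix v assume "v \<in> V"
    then show "c' v < 3" using cB k unfolding col3_def c'_def V by auto
  next
    fix u v assume uv: "u \<in> V" "v \<in> V" "E u v"
    have noab: "\<not> E p q" if "p \<in> B" "q \<in> {a,b}" for p q
    proof
      assume "E p q"
      then have "E q p" by (rule sym)
      then have "p \<in> {u\<in>V. E q u}" using that V by auto
      then have "p \<in> {x,y,a,b}" using na nb that(2) by auto
      then show False using that(1) ab ss(5) by auto
    qed
    have xyB: "\<And>p q. p \<in> B \<Longrightarrow> q \<in> {x,y} \<Longrightarrow> E p q \<Longrightarrow> c p \<in> F"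
      unfolding F_def using sym by auto
    consider "u \<in> B" | "u \<in> {x,y}" | "u \<in> {a,b}" using uv V by auto
    then show "c' u \<noteq> c' v"
    proof cases
      case 1
      consider "v \<in> B" | "v \<in> {x,y}" | "v \<in> {a,b}" using uv V by auto
      then show ?thesis
      proof cases
        case 1 then show ?thesis using \<open>u \<in> B\<close> cB uv cB' unfolding col3_def by auto
      next
        case 2 then have "c u \<in> F" using xyB \<open>u \<in> B\<close> uv by auto
        then show ?thesis using 2 k cB' \<open>u \<in> B\<close> unfolding c'_def by auto
      next
        case 3 then show ?thesis using noab \<open>u \<in> B\<close> uv by auto
      qed
    next
      case 2
      consider "v \<in> B" | "v \<in> {x,y}" | "v \<in> {a,b}" using uv V by auto
      then show ?thesis
      proof cases
        case 1 then have "c v \<in> F" using xyB 2 uv sym by blast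
        then show ?thesis using 2 k cB' 1 unfolding c'_def by auto
      next
        case 3 then show ?thesis using 2 ab kk unfolding c'_def by auto
      next
        case 4: 2 then show ?thesis using \<open>u \<in> {x,y}\<close> uv irr ss sym by auto
      qed
    next
      case 3
      consider "v \<in> B" | "v \<in> {x,y}" | "v \<in> {a,b}" using uv V by auto
      then show ?thesis
      proof cases
        case 1 then show ?thesis using noab 3 uv sym by blast
      next
        case 2 then show ?thesis using 3 ab kk unfolding c'_def by auto
      next
        case 4: 3 then have "u \<noteq> v" using uv irr by auto
        then show ?thesis using 3 4 ab ss kk unfolding c'_def by auto
      qed
    qed
  qed
qed

end



context cub begin

lemma col_ae:
  assumes "col3 U (ae E x y) c"
  shows "col3 U E c" "x \<in> U \<Longrightarrow> y \<in> U \<Longrightarrow> c x \<noteq> c y"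
  using assms unfolding col3_def ae_def by auto

lemma split_deg:
  assumes "sideset x y A" "sideset x y B" "V = A \<union> B \<union> {x,y}" "A \<inter> B = {}"
  shows "card {u\<in>A. E x u} + card {u\<in>B. E x u} = 3" "card {u\<in>A. E y u} + card {u\<in>B. E y u} = 3"
proof -
  have ss: "x \<in> V" "y \<in> V" "x \<noteq> y" "\<not> E x y" "\<not> E y x" using assms(1) sym unfolding sideset_def by auto
  have fA: "finite A" "finite B" using assms(3) fin by auto
  have "{u\<in>V. E x u} = {u\<in>A. E x u} \<union> {u\<in>B. E x u}" using assms(3) ss irr by auto
  then have "card {u\<in>V. E x u} = card {u\<in>A. E x u} + card {u\<in>B. E x u}"
    using card_Un_disjoint[of "{u\<in>A. E x u}" "{u\<in>B. E x u}"] fA assms(4) by auto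
  then show "card {u\<in>A. E x u} + card {u\<in>B. E x u} = 3" using deg3 ss unfolding dg_def by auto
  have "{u\<in>V. E y u} = {u\<in>A. E y u} \<union> {u\<in>B. E y u}" using assms(3) ss irr by auto
  then have "card {u\<in>V. E y u} = card {u\<in>A. E y u} + card {u\<in>B. E y u}"
    using card_Un_disjoint[of "{u\<in>A. E y u}" "{u\<in>B. E y u}"] fA assms(4) by auto
  then show "card {u\<in>A. E y u} + card {u\<in>B. E y u} = 3" using deg3 ss unfolding dg_def by auto
qed

lemma comb:
  assumes "sideset x y A" "sideset x y B" "V = A \<union> B \<union> {x,y}" "A \<inter> B = {}"
    "col3 (A \<union> {x,y}) (ae E x y) c1" "col3 (B \<union> {x,y}) (ae E x y) c2"
  shows "\<exists>c. col3 V E c"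
proof -
  have ss: "x \<notin> A" "y \<notin> A" "x \<notin> B" "y \<notin> B" using assms(1,2) unfolding sideset_def by auto
  have "\<exists>c. col3 ((A \<union> {x,y}) \<union> (B \<union> {x,y})) E c"
  proof (rule glue2[of _ _ c1 _ c2 x y])
    show "col3 (A \<union> {x, y}) E c1" "col3 (B \<union> {x, y}) E c2" using col_ae assms(5,6) by auto
    show "c1 x \<noteq> c1 y" "c2 x \<noteq> c2 y" using col_ae(2) assms(5,6) by auto
    show "(A \<union> {x, y}) \<inter> (B \<union> {x, y}) = {x, y}" using assms(4) by auto
    show "\<forall>u\<in>A \<union> {x, y} - (B \<union> {x, y}). \<forall>v\<in>B \<union> {x, y} - (A \<union> {x, y}). \<not> E u v \<and> \<not> E v u"
    proof (intro ballI)
      fix u v assume "u \<in> A \<union> {x, y} - (B \<union> {x, y})" "v \<in> B \<union> {x, y} - (A \<union> {x, y})"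
      then have uv: "u \<in> A" "v \<in> B" "u \<notin> B" "v \<notin> A" "u \<notin> {x,y}" "v \<notin> {x,y}" by auto
      have "u \<in> V" "v \<in> V" using uv assms(3) by auto
      have "\<not> E u v" using assms(1) uv \<open>v \<in> V\<close> unfolding sideset_def by auto
      moreover have "\<not> E v u" using assms(2) uv \<open>u \<in> V\<close> unfolding sideset_def by auto
      ultimately show "\<not> E u v \<and> \<not> E v u" by auto
    qed
  qed
  moreover have "(A \<union> {x,y}) \<union> (B \<union> {x,y}) = V" using assms(3) by auto
  ultimately show ?thesis by auto
qed

lemma side_IH:
  assumes sA: "sideset x y A" and sB: "sideset x y B" and V: "V = A \<union> B \<union> {x,y}" and d: "A \<inter> B = {}"
    and Bne: "B \<noteq> {}" and dx: "card {u\<in>A. E x u} = 2" and dy: "card {u\<in>A. E y u} = 2"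
    and IH: "\<And>(U::'a set) E'. card U < card V \<Longrightarrow> finite U \<Longrightarrow> symirr E' \<Longrightarrow> \<forall>v\<in>U. dg U E' v = 3 \<Longrightarrow>
       conn U E' \<Longrightarrow> \<not> isK4 E' U \<Longrightarrow> U \<noteq> {} \<Longrightarrow> \<exists>c. col3 U E' c"
  shows "\<exists>c. col3 V E c"
proof -
  have sd: "card {u\<in>B. E x u} = 1" "card {u\<in>B. E y u} = 1" using split_deg[OF sA sB V d] dx dy by auto
  have ss: "x \<noteq> y" "x \<notin> A" "y \<notin> A" "x \<notin> B" "y \<notin> B" "x \<in> V" "y \<in> V" using sA sB unfolding sideset_def by auto
  show ?thesis
  proof (cases "isK4 (ae E x y) (A \<union> {x,y})")
    case True
    then obtain a b where ab: "A = {a,b}" "a \<noteq> b" "E a b" "E x a" "E x b" "E y a" "E y b"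
      using side_K4[OF sA] by blast
    have cB: "\<exists>c. col3 B E c"
    proof (rule sub_col[OF fin si])
      show "\<forall>v\<in>V. dg V E v \<le> 3" using deg3 by auto
      show "conn V E" by (rule cn)
      show "B \<subseteq> V" using V by auto
      show "B \<noteq> V" using ss by auto
    qed
    then obtain c where c: "col3 B E c" by blast
    have V2: "V = B \<union> {x,y} \<union> {a,b}" using V ab(1) by blast
    have nB: "a \<notin> B" "b \<notin> B" using d ab(1) by blast+
    have nxy: "a \<noteq> x" "a \<noteq> y" "b \<noteq> x" "b \<noteq> y" using ss ab(1) by blast+
    show ?thesis
      by (rule diamond[OF sB V2 nB ab(2) nxy ab(3-7) c]) (use sd in auto)
  next
    case False
    have ps: "A \<union> {x,y} \<subset> V"
    proof -
      obtain b where b: "b \<in> B" using Bne by blast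
      have "b \<notin> A \<union> {x,y}" using b d ss by blast
      moreover have "b \<in> V" using b V by blast
      moreover have "A \<union> {x,y} \<subseteq> V" using V by blast
      ultimately show ?thesis by blast
    qed
    have h1: "card (A \<union> {x, y}) < card V" using fin ps by (meson psubset_card_mono)
    have h2: "finite (A \<union> {x, y})" using ps fin by (meson finite_subset psubset_imp_subset)
    have h3: "symirr (ae E x y)" using ae_symirr ss by auto
    have h4: "\<forall>v\<in>A \<union> {x, y}. dg (A \<union> {x, y}) (ae E x y) v = 3" "conn (A \<union> {x, y}) (ae E x y)"
      using side_cubic[OF sA dx dy] by auto
    have h5: "A \<union> {x,y} \<noteq> {}" by simp
    obtain c1 where c1: "col3 (A \<union> {x,y}) (ae E x y) c1" using IH[OF h1 h2 h3 h4 False h5] by blast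
    have "\<exists>c. col3 (B \<union> {x,y}) (ae E x y) c" using side_col[OF sB] sd by auto
    then obtain c2 where c2: "col3 (B \<union> {x,y}) (ae E x y) c2" by blast
    show ?thesis by (rule comb[OF sA sB V d c1 c2])
  qed
qed

end



context cub begin

lemma find_zxy:
  assumes nK4: "\<not> isK4 E V" and ne: "V \<noteq> {}"
  shows "\<exists>z x y. z \<in> V \<and> x \<in> V \<and> y \<in> V \<and> E z x \<and> E z y \<and> x \<noteq> y \<and> \<not> E x y"
proof (rule ccontr)
  assume H: "\<not> ?thesis"
  then have cl: "\<And>z x y. z \<in> V \<Longrightarrow> x \<in> V \<Longrightarrow> y \<in> V \<Longrightarrow> E z x \<Longrightarrow> E z y \<Longrightarrow> x \<noteq> y \<Longrightarrow> E x y" by blast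
  obtain v where v: "v \<in> V" using ne by blast
  define N where "N = {u\<in>V. E v u}"
  have cN: "card N = 3" using deg3 v unfolding N_def dg_def by auto
  have fN: "finite N" using fin unfolding N_def by auto
  have vN: "v \<notin> N" using irr unfolding N_def by auto
  have nbs: "{u\<in>V. E s u} = insert v (N - {s})" if s: "s \<in> N" for s
  proof -
    have sub: "insert v (N - {s}) \<subseteq> {u\<in>V. E s u}"
      using s v cl[of v s] sym unfolding N_def by auto
    have "card (insert v (N - {s})) = 3" using vN cN s fN by (simp add: card_insert_if)
    moreover have "card {u\<in>V. E s u} = 3" using deg3 s unfolding N_def dg_def by auto
    ultimately show ?thesis using card_seteq[OF _ sub] fin by auto
  qed
  have "clsd V E (insert v N)" unfolding clsd_def
  proof (intro conjI ballI impI)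
    show "insert v N \<subseteq> V" using v unfolding N_def by auto
    fix s u assume su: "s \<in> insert v N" "u \<in> V" "E s u"
    show "u \<in> insert v N"
    proof (cases "s = v")
      case True then show ?thesis using su unfolding N_def by auto
    next
      case False then have "s \<in> N" using su by auto
      then show ?thesis using nbs su by auto
    qed
  qed
  then have "insert v N = V" using closed_V by auto
  moreover have "isK4 E (insert v N)" unfolding isK4_def
  proof (intro conjI ballI impI)
    show "card (insert v N) = 4" using cN vN fN by auto
    fix a b assume ab: "a \<in> insert v N" "b \<in> insert v N" "a \<noteq> b"
    then show "E a b" using cl[of v a b] v sym unfolding N_def by auto
  qed
  ultimately show False using nK4 by auto
qed

lemma cubic_case:
  assumes nK4: "\<not> isK4 E V" and ne: "V \<noteq> {}"
    and IH: "\<And>(U::'a set) E'. card U < card V \<Longrightarrow> finite U \<Longrightarrow> symirr E' \<Longrightarrow> \<forall>v\<in>U. dg U E' v = 3 \<Longrightarrow>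
       conn U E' \<Longrightarrow> \<not> isK4 E' U \<Longrightarrow> U \<noteq> {} \<Longrightarrow> \<exists>c. col3 U E' c"
  shows "\<exists>c. col3 V E c"
proof -
  obtain z x y where zxy: "z \<in> V" "x \<in> V" "y \<in> V" "E z x" "E z y" "x \<noteq> y" "\<not> E x y"
    using find_zxy[OF nK4 ne] by blast
  define W0 where "W0 = V - {x,y}"
  define K where "K = \<Inter>{T. T \<subseteq> W0 \<and> z \<in> T \<and> (\<forall>t\<in>T. \<forall>u\<in>W0. E t u \<longrightarrow> u \<in> T)}"
  have zW: "z \<in> W0" using zxy irr unfolding W0_def by auto
  have Kmin: "K \<subseteq> T" if "T \<subseteq> W0" "z \<in> T" "\<forall>t\<in>T. \<forall>u\<in>W0. E t u \<longrightarrow> u \<in> T" for T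
    using that unfolding K_def by blast
  have KW: "K \<subseteq> W0" using Kmin[of W0] zW by auto
  have zK: "z \<in> K" unfolding K_def by auto
  have Kcl: "\<forall>t\<in>K. \<forall>u\<in>W0. E t u \<longrightarrow> u \<in> K" unfolding K_def by blast
  define L where "L = W0 - K"
  have Kcl2: "\<forall>a\<in>K. \<forall>u\<in>V. E a u \<longrightarrow> u \<in> K \<union> {x,y}"
  proof (intro ballI impI)
    fix a u assume au: "a \<in> K" "u \<in> V" "E a u"
    show "u \<in> K \<union> {x,y}"
    proof (cases "u \<in> W0")
      case True then show ?thesis using Kcl au by blast
    next
      case False then show ?thesis using au(2) unfolding W0_def by blast
    qed
  qed
  have KV: "K \<subseteq> V - {x,y}" using KW unfolding W0_def by blast
  have sK: "sideset x y K" unfolding sideset_def using zxy(2,3,6,7) KV Kcl2 by blast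
  have sL: "sideset x y L" unfolding sideset_def
  proof (intro conjI ballI impI)
    show "L \<subseteq> V - {x,y}" unfolding L_def W0_def by auto
    fix l u assume lu: "l \<in> L" "u \<in> V" "E l u"
    have "u \<notin> K"
    proof
      assume "u \<in> K"
      then have "l \<in> K" using Kcl sym lu unfolding L_def by auto
      then show False using lu unfolding L_def by auto
    qed
    then show "u \<in> L \<union> {x,y}" using lu unfolding L_def W0_def by auto
  qed (use zxy in auto)
  have V: "V = K \<union> L \<union> {x,y}" using KW zxy(2,3) unfolding L_def W0_def by blast
  have d: "K \<inter> L = {}" unfolding L_def by auto
  have degV: "\<forall>v\<in>V. dg V E v \<le> 3" using deg3 by auto
  show ?thesis
  proof (cases "L = {}")
    case True
    then have KW0: "K = W0" using KW unfolding L_def by auto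
    have "\<exists>c. (\<forall>v\<in>{x,y}. c v = (\<lambda>_. 0::nat) v) \<and> (\<forall>v\<in>W0. c v < 3) \<and>
        (\<forall>u\<in>W0. \<forall>v\<in>W0 \<union> {x,y}. E u v \<longrightarrow> c u \<noteq> c v)"
    proof (rule greedy)
      show "finite W0" using fin unfolding W0_def by auto
      show "W0 \<inter> {x,y} = {}" unfolding W0_def by auto
      show "symirr E" by (rule si)
      show "\<forall>S\<subseteq>W0. S \<noteq> {} \<longrightarrow> (\<exists>w\<in>S. card {u\<in>S. E w u} + card ((\<lambda>_. 0::nat) ` {u\<in>{x,y}. E w u}) \<le> 2)"
      proof (intro allI impI)
        fix S assume S: "S \<subseteq> W0" "S \<noteq> {}"
        have fS: "finite S" using S fin unfolding W0_def by (meson finite_Diff finite_subset)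
        show "\<exists>w\<in>S. card {u\<in>S. E w u} + card ((\<lambda>_. 0::nat) ` {u\<in>{x,y}. E w u}) \<le> 2"
        proof (cases "z \<in> S")
          case True
          have sub: "{u\<in>S. E z u} \<subseteq> {u\<in>V. E z u} - {x,y}" using S unfolding W0_def by auto
          have Nz: "card {u\<in>V. E z u} = 3" using deg3 zxy(1) unfolding dg_def by blast
          have xyN: "{x,y} \<subseteq> {u\<in>V. E z u}" using zxy by blast
          have "card ({u\<in>V. E z u} - {x,y}) = card {u\<in>V. E z u} - card {x,y}"
            by (rule card_Diff_subset[OF _ xyN]) simp
          moreover have "card {x,y} = 2" using zxy(6) by simp
          ultimately have c1: "card ({u\<in>V. E z u} - {x,y}) = 1" using Nz by simp
          have "card {u\<in>S. E z u} \<le> card ({u\<in>V. E z u} - {x,y})"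
            by (rule card_mono[OF _ sub]) (simp add: fin)
          then have "card {u\<in>S. E z u} \<le> 1" using c1 by simp
          moreover have "card ((\<lambda>_. 0::nat) ` {u\<in>{x,y}. E z u}) \<le> 1"
          proof -
            have "(\<lambda>_. 0::nat) ` {u\<in>{x,y}. E z u} \<subseteq> {0}" by auto
            then show ?thesis using card_mono[of "{0::nat}"] by fastforce
          qed
          ultimately have "card {u\<in>S. E z u} + card ((\<lambda>_. 0::nat) ` {u\<in>{x,y}. E z u}) \<le> 2" by linarith
          then show ?thesis using True by blast
        next
          case False
          have "\<exists>s\<in>S. \<exists>u\<in>W0 - S. E s u"
          proof (rule ccontr)
            assume nn: "\<not> ?thesis"
            have "K \<subseteq> W0 - S"
            proof (rule Kmin)
              show "W0 - S \<subseteq> W0" "z \<in> W0 - S" using zW False by auto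
              show "\<forall>t\<in>W0 - S. \<forall>u\<in>W0. E t u \<longrightarrow> u \<in> W0 - S" using nn sym by blast
            qed
            then show False using KW0 S by auto
          qed
          then obtain s u where su: "s \<in> S" "u \<in> W0 - S" "E s u" by blast
          have sub: "{u\<in>S. E s u} \<union> {u\<in>{x,y}. E s u} \<subseteq> {u'\<in>V. E s u'} - {u}"
            using S su zxy(2,3) unfolding W0_def by auto
          have sV: "s \<in> V" "u \<in> V" using su S unfolding W0_def by blast+
          have Ns: "card {u'\<in>V. E s u'} = 3" using deg3 sV(1) unfolding dg_def by blast
          have uN: "{u} \<subseteq> {u'\<in>V. E s u'}" using sV su(3) by blast
          have "card ({u'\<in>V. E s u'} - {u}) = card {u'\<in>V. E s u'} - card {u}"
            by (rule card_Diff_subset[OF _ uN]) simp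
          then have c2: "card ({u'\<in>V. E s u'} - {u}) = 2" using Ns by simp
          have "card ({u\<in>S. E s u} \<union> {u\<in>{x,y}. E s u}) \<le> card ({u'\<in>V. E s u'} - {u})"
            by (rule card_mono[OF _ sub]) (simp add: fin)
          then have "card ({u\<in>S. E s u} \<union> {u\<in>{x,y}. E s u}) \<le> 2" using c2 by simp
          moreover have "card ({u\<in>S. E s u} \<union> {u\<in>{x,y}. E s u}) = card {u\<in>S. E s u} + card {u\<in>{x,y}. E s u}"
            by (rule card_Un_disjoint) (use fS S in \<open>auto simp: W0_def\<close>)
          moreover have "card ((\<lambda>_. 0::nat) ` {u\<in>{x,y}. E s u}) \<le> card {u\<in>{x,y}. E s u}"
            by (rule card_image_le) auto
          ultimately have "card {u\<in>S. E s u} + card ((\<lambda>_. 0::nat) ` {u\<in>{x,y}. E s u}) \<le> 2" by linarith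
          then show ?thesis using su(1) by blast
        qed
      qed
    qed auto
    then obtain c :: "'a \<Rightarrow> nat" where c: "\<forall>v\<in>{x,y}. c v = 0" "\<forall>v\<in>W0. c v < 3"
        "\<forall>u\<in>W0. \<forall>v\<in>W0 \<union> {x,y}. E u v \<longrightarrow> c u \<noteq> c v" by auto
    have "col3 V E c" unfolding col3_def
    proof (intro conjI ballI impI)
      fix v assume "v \<in> V"
      then have "v \<in> W0 \<or> v \<in> {x,y}" unfolding W0_def by blast
      then show "c v < 3" using c(1,2) by fastforce
    next
      fix u v assume uv: "u \<in> V" "v \<in> V" "E u v"
      have uv': "u \<in> W0 \<or> u \<in> {x,y}" "v \<in> W0 \<or> v \<in> {x,y}" using uv unfolding W0_def by blast+
      show "c u \<noteq> c v"
      proof (cases "u \<in> W0")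
        case True
        have "v \<in> W0 \<union> {x,y}" using uv' by blast
        then show ?thesis using c(3) True uv(3) by blast
      next
        case False
        then have u: "u \<in> {x,y}" using uv' by blast
        show ?thesis
        proof (cases "v \<in> W0")
          case True
          have "E v u" using uv(3) by (rule sym)
          moreover have "u \<in> W0 \<union> {x,y}" using u by blast
          ultimately have "c v \<noteq> c u" using c(3) True by blast
          then show ?thesis by simp
        next
          case False
          then have "v \<in> {x,y}" using uv' by blast
          then show ?thesis using u uv(3) irr zxy(7) sym by blast
        qed
      qed
    qed
    then show ?thesis by auto
  next
    case False
    have sdx: "card {u\<in>K. E x u} + card {u\<in>L. E x u} = 3" and sdy: "card {u\<in>K. E y u} + card {u\<in>L. E y u} = 3"
      using split_deg[OF sK sL V d] by auto
    have fK: "finite K" "finite L" using V fin by (metis finite_Un)+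
    have dKx: "card {u\<in>K. E x u} \<ge> 1"
    proof -
      have "z \<in> {u\<in>K. E x u}" using zK zxy sym by auto
      then have "{u\<in>K. E x u} \<noteq> {}" by blast
      moreover have "finite {u\<in>K. E x u}" using fK by simp
      ultimately have "card {u\<in>K. E x u} > 0" by (simp add: card_gt_0_iff)
      then show ?thesis by simp
    qed
    have dKy: "card {u\<in>K. E y u} \<ge> 1"
    proof -
      have "z \<in> {u\<in>K. E y u}" using zK zxy sym by auto
      then have "{u\<in>K. E y u} \<noteq> {}" by blast
      moreover have "finite {u\<in>K. E y u}" using fK by simp
      ultimately have "card {u\<in>K. E y u} > 0" by (simp add: card_gt_0_iff)
      then show ?thesis by simp
    qed
    have LneV: "L \<noteq> V" using zxy sL unfolding sideset_def by auto
    have KneV: "K \<noteq> V" using zxy sK unfolding sideset_def by auto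
    consider "card {u\<in>K. E x u} = 3" | "card {u\<in>K. E y u} = 3"
      | "card {u\<in>K. E x u} = 2 \<and> card {u\<in>K. E y u} = 2"
      | "card {u\<in>K. E x u} = 1 \<and> card {u\<in>K. E y u} = 1"
      | "card {u\<in>K. E x u} \<le> 2 \<and> card {u\<in>K. E y u} \<le> 2 \<and> (card {u\<in>K. E x u} \<le> 1 \<or> card {u\<in>K. E y u} \<le> 1)
          \<and> card {u\<in>L. E x u} \<le> 2 \<and> card {u\<in>L. E y u} \<le> 2 \<and> (card {u\<in>L. E x u} \<le> 1 \<or> card {u\<in>L. E y u} \<le> 1)"
      using sdx sdy dKx dKy by linarith
    then show ?thesis
    proof cases
      case 1
      have "card {u\<in>L. E x u} = 0" using 1 sdx by linarith
      then have Lx: "{u\<in>L. E x u} = {}" using fK(2) by simp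
      have LxyV: "L \<subseteq> V - {x,y}" using sL unfolding sideset_def by blast
      obtain l where l: "l \<in> L" using False by blast
      have U1: "K \<union> {x,y} \<subseteq> V" "K \<union> {x,y} \<noteq> V"
      proof -
        show "K \<union> {x,y} \<subseteq> V" using V by blast
        have "l \<notin> K \<union> {x,y}" using l d LxyV by blast
        moreover have "l \<in> V" using l LxyV by blast
        ultimately show "K \<union> {x,y} \<noteq> V" by blast
      qed
      have U2: "L \<union> {y} \<subseteq> V" "L \<union> {y} \<noteq> V"
      proof -
        show "L \<union> {y} \<subseteq> V" using V by blast
        have "x \<notin> L \<union> {y}" using LxyV zxy(6) by blast
        then show "L \<union> {y} \<noteq> V" using zxy(2,3) by blast
      qed
      obtain c1 where c1: "col3 (K \<union> {x,y}) E c1"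
        using sub_col[OF fin si degV cn U1] by blast
      obtain c2 where c2: "col3 (L \<union> {y}) E c2"
        using sub_col[OF fin si degV cn U2] by blast
      have "\<exists>c. col3 ((K \<union> {x,y}) \<union> (L \<union> {y})) E c"
      proof (rule glue1[OF c1 c2])
        show "(K \<union> {x, y}) \<inter> (L \<union> {y}) = {y}" using d LxyV KV zxy(6) by blast
        show "\<forall>u\<in>K \<union> {x, y} - (L \<union> {y}). \<forall>v\<in>L \<union> {y} - (K \<union> {x, y}). \<not> E u v \<and> \<not> E v u"
        proof (intro ballI)
          fix u v assume uv: "u \<in> K \<union> {x, y} - (L \<union> {y})" "v \<in> L \<union> {y} - (K \<union> {x, y})"
          then have v: "v \<in> L" "v \<in> V" using V by blast+
          have "\<not> E u v"
          proof
            assume e: "E u v"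
            then have "E v u" by (rule sym)
            moreover have "u \<in> V" using uv U1(1) by blast
            ultimately have "u \<in> L \<union> {x,y}" using sL v(1) unfolding sideset_def by blast
            then have "u = x" using uv by auto
            then show False using Lx e v by auto
          qed
          moreover have "\<not> E v u"
          proof
            assume "E v u" then have "E u v" by (rule sym)
            with \<open>\<not> E u v\<close> show False by auto
          qed
          ultimately show "\<not> E u v \<and> \<not> E v u" by auto
        qed
      qed
      moreover have "(K \<union> {x,y}) \<union> (L \<union> {y}) = V" using V by blast
      ultimately show ?thesis by auto
    next
      case 2
      have "card {u\<in>L. E y u} = 0" using 2 sdy by linarith
      then have Ly: "{u\<in>L. E y u} = {}" using fK(2) by simp
      have LxyV: "L \<subseteq> V - {x,y}" using sL unfolding sideset_def by blast
      obtain l where l: "l \<in> L" using False by blast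
      have U1: "K \<union> {x,y} \<subseteq> V" "K \<union> {x,y} \<noteq> V"
      proof -
        show "K \<union> {x,y} \<subseteq> V" using V by blast
        have "l \<notin> K \<union> {x,y}" using l d LxyV by blast
        moreover have "l \<in> V" using l LxyV by blast
        ultimately show "K \<union> {x,y} \<noteq> V" by blast
      qed
      have U2: "L \<union> {x} \<subseteq> V" "L \<union> {x} \<noteq> V"
      proof -
        show "L \<union> {x} \<subseteq> V" using V by blast
        have "y \<notin> L \<union> {x}" using LxyV zxy(6) by blast
        then show "L \<union> {x} \<noteq> V" using zxy(2,3) by blast
      qed
      obtain c1 where c1: "col3 (K \<union> {x,y}) E c1"
        using sub_col[OF fin si degV cn U1] by blast
      obtain c2 where c2: "col3 (L \<union> {x}) E c2"
        using sub_col[OF fin si degV cn U2] by blast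
      have "\<exists>c. col3 ((K \<union> {x,y}) \<union> (L \<union> {x})) E c"
      proof (rule glue1[OF c1 c2])
        show "(K \<union> {x, y}) \<inter> (L \<union> {x}) = {x}" using d LxyV KV zxy(6) by blast
        show "\<forall>u\<in>K \<union> {x, y} - (L \<union> {x}). \<forall>v\<in>L \<union> {x} - (K \<union> {x, y}). \<not> E u v \<and> \<not> E v u"
        proof (intro ballI)
          fix u v assume uv: "u \<in> K \<union> {x, y} - (L \<union> {x})" "v \<in> L \<union> {x} - (K \<union> {x, y})"
          then have v: "v \<in> L" "v \<in> V" using V by blast+
          have "\<not> E u v"
          proof
            assume e: "E u v"
            then have "E v u" by (rule sym)
            moreover have "u \<in> V" using uv U1(1) by blast
            ultimately have "u \<in> L \<union> {x,y}" using sL v(1) unfolding sideset_def by blast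
            then have "u = y" using uv by auto
            then show False using Ly e v by auto
          qed
          moreover have "\<not> E v u"
          proof
            assume "E v u" then have "E u v" by (rule sym)
            with \<open>\<not> E u v\<close> show False by auto
          qed
          ultimately show "\<not> E u v \<and> \<not> E v u" by auto
        qed
      qed
      moreover have "(K \<union> {x,y}) \<union> (L \<union> {x}) = V" using V by blast
      ultimately show ?thesis by auto
    next
      case 3
      show ?thesis using side_IH[OF sK sL V d False _ _ IH] 3 by blast
    next
      case 4
      have V': "V = L \<union> K \<union> {x,y}" using V by auto
      have "K \<noteq> {}" using zK by auto
      have dLx: "card {u\<in>L. E x u} = 2" "card {u\<in>L. E y u} = 2" using 4 sdx sdy by auto
      have d': "L \<inter> K = {}" using d by blast
      show ?thesis using side_IH[OF sL sK V' d' \<open>K \<noteq> {}\<close> dLx IH] by blast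
    next
      case 5
      obtain c1 where c1: "col3 (K \<union> {x,y}) (ae E x y) c1" using side_col[OF sK] 5 by blast
      obtain c2 where c2: "col3 (L \<union> {x,y}) (ae E x y) c2" using side_col[OF sL] 5 by blast
      show ?thesis by (rule comb[OF sK sL V d c1 c2])
    qed
  qed
qed

end



lemma brooks:
  "finite V \<Longrightarrow> symirr E \<Longrightarrow> \<forall>v\<in>V. dg V E v = 3 \<Longrightarrow> conn V E \<Longrightarrow> \<not> isK4 E V \<Longrightarrow> V \<noteq> {}
   \<Longrightarrow> \<exists>c. col3 V E c"
proof (induction "card V" arbitrary: V E rule: less_induct)
  case less
  interpret cub V E using less.prems by unfold_locales auto
  show ?case
  proof (rule cubic_case)
    show "\<not> isK4 E V" "V \<noteq> {}" using less.prems by auto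
    fix U :: "'a set" and E'
    assume "card U < card V" "finite U" "symirr E'" "\<forall>v\<in>U. dg U E' v = 3" "conn U E'" "\<not> isK4 E' U" "U \<noteq> {}"
    then show "\<exists>c. col3 U E' c" using less.hyps by blast
  qed
qed

definition sig :: "'a set \<Rightarrow> ('a \<Rightarrow> 'a \<Rightarrow> bool) \<Rightarrow> nat" where
  "sig R E = (\<Sum>v\<in>R. card {u\<in>R. E v u})"

lemma card_as_sum: "finite A \<Longrightarrow> card {u\<in>A. P u} = (\<Sum>u\<in>A. if P u then 1 else 0)"
  by (simp add: sum.inter_filter[symmetric])

lemma sig_insert:
  assumes "finite R" "a \<notin> R" "symirr E"
  shows "sig (insert a R) E = sig R E + 2 * card {u\<in>R. E a u}"
proof -
  have sym: "\<And>p q. E p q \<Longrightarrow> E q p" and irr: "\<And>p. \<not> E p p" using assms(3) unfolding symirr_def by auto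
  have h1: "card {u\<in>insert a R. E a u} = card {u\<in>R. E a u}"
  proof -
    have "{u\<in>insert a R. E a u} = {u\<in>R. E a u}" using irr by auto
    then show ?thesis by simp
  qed
  have h2: "card {u\<in>insert a R. E v u} = card {u\<in>R. E v u} + (if E v a then 1 else 0)" if "v \<in> R" for v
  proof (cases "E v a")
    case True
    then have "{u\<in>insert a R. E v u} = insert a {u\<in>R. E v u}" by auto
    then show ?thesis using True assms(1,2) by simp
  next
    case False
    then have "{u\<in>insert a R. E v u} = {u\<in>R. E v u}" by auto
    then show ?thesis using False by simp
  qed
  have h3: "(\<Sum>v\<in>R. (if E v a then 1 else 0)) = card {u\<in>R. E a u}"
  proof -
    have eq: "(E v a) = (E a v)" for v using sym by blast
    have "(\<Sum>v\<in>R. (if E v a then 1 else (0::nat))) = (\<Sum>v\<in>R. (if E a v then 1 else 0))"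
      by (simp only: eq)
    then show ?thesis using card_as_sum[OF assms(1), of "E a"] by simp
  qed
  have "sig (insert a R) E = card {u\<in>insert a R. E a u} + (\<Sum>v\<in>R. card {u\<in>insert a R. E v u})"
    unfolding sig_def using assms(1,2) by simp
  also have "(\<Sum>v\<in>R. card {u\<in>insert a R. E v u}) = (\<Sum>v\<in>R. card {u\<in>R. E v u} + (if E v a then 1 else 0))"
    using h2 by (rule sum.cong[OF refl])
  also have "\<dots> = sig R E + card {u\<in>R. E a u}" unfolding sig_def sum.distrib h3 by simp
  finally show ?thesis using h1 by simp
qed

lemma sig_even: "finite R \<Longrightarrow> symirr E \<Longrightarrow> even (sig R E)"
proof (induction R rule: finite_induct)
  case empty then show ?case unfolding sig_def by simp
next
  case (insert a R) then show ?case using sig_insert[of R a E] by simp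
qed

lemma ind_big:
  assumes "finite R" "symirr E"
  shows "\<exists>J\<subseteq>R. (\<forall>a\<in>J. \<forall>b\<in>J. \<not> E a b) \<and> 2 * card R \<le> 2 * card J + sig R E"
  using assms
proof (induction "card R" arbitrary: R rule: less_induct)
  case less
  show ?case
  proof (cases "\<exists>w\<in>R. \<exists>u\<in>R. E w u")
    case False
    then have "\<forall>a\<in>R. \<forall>b\<in>R. \<not> E a b" by blast
    moreover have "2 * card R \<le> 2 * card R + sig R E" by simp
    ultimately show ?thesis by blast
  next
    case True
    then obtain w u where wu: "w \<in> R" "u \<in> R" "E w u" by blast
    define R' where "R' = R - {w}"
    have R: "R = insert w R'" "w \<notin> R'" "finite R'" using wu less.prems unfolding R'_def by auto
    have "card R' < card R" using R by simp
    then obtain J where J: "J \<subseteq> R'" "\<forall>a\<in>J. \<forall>b\<in>J. \<not> E a b" "2 * card R' \<le> 2 * card J + sig R' E"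
      using less.hyps[OF _ R(3) less.prems(2)] by blast
    have "sig R E = sig R' E + 2 * card {u\<in>R'. E w u}" using sig_insert[OF R(3) R(2) less.prems(2)] R(1) by simp
    moreover have "card {u\<in>R'. E w u} \<ge> 1"
    proof -
      have "u \<noteq> w" using wu(3) less.prems(2) unfolding symirr_def by blast
      then have "u \<in> {u\<in>R'. E w u}" using wu unfolding R'_def by blast
      then have "{u\<in>R'. E w u} \<noteq> {}" by blast
      moreover have "finite {u\<in>R'. E w u}" using R(3) by simp
      ultimately show ?thesis by (simp add: card_gt_0_iff Suc_le_eq)
    qed
    moreover have "card R = Suc (card R')" using R by simp
    ultimately have "2 * card R \<le> 2 * card J + sig R E" using J(3) by linarith
    moreover have "J \<subseteq> R" using J(1) R(1) by blast
    ultimately show ?thesis using J(2) by blast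
  qed
qed




lemma count_lemma:
  assumes fin: "finite V" and si: "symirr E" and deg: "\<forall>v\<in>V. card {u\<in>V. E v u} = 3"
    and DV: "D \<subseteq> V" and dis: "\<forall>x\<in>D. card {y\<in>D. E x y} \<le> 1"
    and J: "2 * card (V - D) \<le> 2 * card J + sig (V - D) E"
  shows "3 * card D + card {x\<in>D. card {y\<in>D. E x y} = 0} \<le> 2 * card J + card V"
proof -
  define R where "R = V - D"
  have fD: "finite D" "finite R" using fin DV unfolding R_def by (auto intro: finite_subset)
  have sym: "\<And>p q. E p q \<Longrightarrow> E q p" using si unfolding symirr_def by blast
  have VRD: "V = R \<union> D" "R \<inter> D = {}" using DV unfolding R_def by blast+
  have spl: "card {u\<in>V. E v u} = card {u\<in>R. E v u} + card {u\<in>D. E v u}" for v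
  proof -
    have "{u\<in>V. E v u} = {u\<in>R. E v u} \<union> {u\<in>D. E v u}" using VRD by blast
    moreover have "{u\<in>R. E v u} \<inter> {u\<in>D. E v u} = {}" using VRD by blast
    ultimately show ?thesis using fD by (simp add: card_Un_disjoint)
  qed
  define SRD where "SRD = (\<Sum>v\<in>R. card {u\<in>D. E v u})"
  define SDR where "SDR = (\<Sum>u\<in>D. card {v\<in>R. E u v})"
  define SDD where "SDD = (\<Sum>u\<in>D. card {v\<in>D. E u v})"
  define i where "i = card {x\<in>D. card {y\<in>D. E x y} = 0}"
  have A: "sig R E + SRD = 3 * card R"
  proof -
    have "sig R E + SRD = (\<Sum>v\<in>R. card {u\<in>R. E v u} + card {u\<in>D. E v u})"
      unfolding sig_def SRD_def by (simp add: sum.distrib)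
    also have "\<dots> = (\<Sum>v\<in>R. 3)"
    proof (rule sum.cong[OF refl])
      fix v assume "v \<in> R"
      then show "card {u\<in>R. E v u} + card {u\<in>D. E v u} = 3" using spl[of v] deg VRD by auto
    qed
    finally show ?thesis by simp
  qed
  have B: "SRD = SDR"
  proof -
    have "SRD = (\<Sum>v\<in>R. \<Sum>u\<in>D. if E v u then 1 else 0)"
      unfolding SRD_def using card_as_sum[OF fD(1)] by simp
    also have "\<dots> = (\<Sum>u\<in>D. \<Sum>v\<in>R. if E v u then 1 else 0)" by (rule sum.swap)
    also have "\<dots> = (\<Sum>u\<in>D. \<Sum>v\<in>R. if E u v then 1 else 0)"
    proof -
      have eq: "(E v u) = (E u v)" for u v using sym by blast
      show ?thesis by (simp only: eq)
    qed
    also have "\<dots> = SDR" unfolding SDR_def using card_as_sum[OF fD(2)] by simp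
    finally show ?thesis .
  qed
  have C: "SDR + SDD = 3 * card D"
  proof -
    have spl2: "card {u\<in>V. E v u} = card {u\<in>R. E v u} + card {u\<in>D. E v u}" for v by (rule spl)
    have "SDR + SDD = (\<Sum>u\<in>D. card {v\<in>R. E u v} + card {v\<in>D. E u v})"
      unfolding SDR_def SDD_def by (simp add: sum.distrib)
    also have "\<dots> = (\<Sum>u\<in>D. 3)"
    proof (rule sum.cong[OF refl])
      fix u assume "u \<in> D"
      then show "card {v\<in>R. E u v} + card {v\<in>D. E u v} = 3" using spl2[of u] deg DV by auto
    qed
    finally show ?thesis by simp
  qed
  have Dd: "SDD + i = card D"
  proof -
    have i2: "i = (\<Sum>u\<in>D. if card {y\<in>D. E u y} = 0 then 1 else 0)"
      unfolding i_def using card_as_sum[OF fD(1)] by simp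
    have "SDD + i = (\<Sum>u\<in>D. card {v\<in>D. E u v} + (if card {y\<in>D. E u y} = 0 then 1 else 0))"
      unfolding SDD_def i2 by (simp add: sum.distrib)
    also have "\<dots> = (\<Sum>u\<in>D. 1)"
    proof (rule sum.cong[OF refl])
      fix u assume "u \<in> D"
      then have "card {v\<in>D. E u v} \<le> 1" using dis by blast
      then show "card {v\<in>D. E u v} + (if card {y\<in>D. E u y} = 0 then 1 else 0) = 1" by auto
    qed
    finally show ?thesis by simp
  qed
  have cV: "card V = card R + card D" using VRD fD by (simp add: card_Un_disjoint)
  have J': "2 * card R \<le> 2 * card J + sig R E" using J unfolding R_def .
  show ?thesis using A B C Dd cV J' unfolding i_def[symmetric] by linarith
qed




theorem mainTheorem2:
  fixes V :: "'a set" and E :: "'a \<Rightarrow> 'a \<Rightarrow> bool"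
  assumes "simple_graph V E" and "connected_graph V E" and "cubic V E"
    and "card V \<ge> 6"
    and "5 * independence_number V E = 3 * diss V E"
  shows "18 dvd card V \<and> 3 * independence_number V E = card V \<and>
         9 * diss V E = 5 * card V \<and>
         (\<forall>D. max_dissociation_set V E D \<longrightarrow> (\<forall>x\<in>D. card {y \<in> D. E x y} = 1))"
proof -
  have fin: "finite V" and inV: "\<And>x y. E x y \<Longrightarrow> x \<in> V \<and> y \<in> V"
    and sym: "\<And>x y. E x y \<Longrightarrow> E y x" and irr: "\<And>x. \<not> E x x"
    using assms(1) unfolding simple_graph_def by blast+
  have si: "symirr E" unfolding symirr_def using sym irr by blast
  have deg: "\<forall>v\<in>V. card {u\<in>V. E v u} = 3" using assms(3) unfolding cubic_def neighbors_def by blast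
  have deg3: "\<forall>v\<in>V. dg V E v = 3" using deg unfolding dg_def by blast
  have cn: "conn V E" unfolding conn_def
  proof (intro allI impI)
    fix S assume S: "clsd V E S" "S \<noteq> {}"
    then obtain s where s: "s \<in> S" by blast
    have "v \<in> S" if v: "v \<in> V" for v
    proof -
      have sV: "s \<in> V" using S(1) s unfolding clsd_def by blast
      have "(\<lambda>x y. x \<in> V \<and> y \<in> V \<and> E x y)\<^sup>*\<^sup>* s v" using assms(2) sV v unfolding connected_graph_def by blast
      then show "v \<in> S"
      proof (induction rule: rtranclp_induct)
        case base then show ?case using s .
      next
        case (step b c) then show ?case using S(1) unfolding clsd_def by blast
      qed
    qed
    then show "S = V" using S(1) unfolding clsd_def by blast
  qed
  have nK4: "\<not> isK4 E V" using assms(4) unfolding isK4_def by auto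
  have ne: "V \<noteq> {}" using assms(4) by auto
  obtain c where c: "col3 V E c" using brooks[OF fin si deg3 cn nK4 ne] by blast
  define a where "a = independence_number V E"
  define d where "d = diss V E"
  define n where "n = card V"
  have finIS: "finite (card ` {S. independent_set V E S})"
    using fin unfolding independent_set_def by (simp add: finite_subset[of _ "Pow V"] subset_eq)
  have aJ: "card J \<le> a" if "independent_set V E J" for J
    unfolding a_def independence_number_def using that finIS by (simp add: Max_ge)
  have finDS: "finite {D. dissociation_set V E D}"
    using fin unfolding dissociation_set_def by (simp add: finite_subset[of _ "Pow V"] subset_eq)
  have "{} \<in> {D. dissociation_set V E D}" unfolding dissociation_set_def by simp
  then have "d \<in> card ` {D. dissociation_set V E D}" unfolding d_def diss_def
    using finDS by (intro Max_in) auto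
  then obtain D0 where D0: "dissociation_set V E D0" "card D0 = d" by auto
  (* colouring gives 3a >= n *)
  have na: "n \<le> 3 * a"
  proof -
    define C where "C k = {v\<in>V. c v = k}" for k :: nat
    have indep: "independent_set V E (C k)" for k
      unfolding independent_set_def C_def using c unfolding col3_def by blast
    have "V = C 0 \<union> C 1 \<union> C 2"
    proof
      show "V \<subseteq> C 0 \<union> C 1 \<union> C 2"
      proof
        fix v assume "v \<in> V"
        then have "c v < 3" using c unfolding col3_def by blast
        then have "c v = 0 \<or> c v = 1 \<or> c v = 2" by auto
        then show "v \<in> C 0 \<union> C 1 \<union> C 2" using \<open>v \<in> V\<close> unfolding C_def by auto
      qed
    qed (auto simp: C_def)
    then have "n \<le> card (C 0 \<union> C 1) + card (C 2)" unfolding n_def by (metis card_Un_le)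
    also have "\<dots> \<le> card (C 0) + card (C 1) + card (C 2)" using card_Un_le[of "C 0" "C 1"] by simp
    also have "\<dots> \<le> 3 * a" using aJ[OF indep[of 0]] aJ[OF indep[of 1]] aJ[OF indep[of 2]] by linarith
    finally show ?thesis .
  qed
  have key: "3 * card D + card {x\<in>D. card {y\<in>D. E x y} = 0} \<le> 2 * a + n"
    if D: "dissociation_set V E D" for D
  proof -
    have DV: "D \<subseteq> V" and dis: "\<forall>x\<in>D. card {y\<in>D. E x y} \<le> 1" using D unfolding dissociation_set_def by blast+
    obtain J where J: "J \<subseteq> V - D" "\<forall>x\<in>J. \<forall>y\<in>J. \<not> E x y" "2 * card (V - D) \<le> 2 * card J + sig (V - D) E"
      using ind_big[of "V - D" E] fin si by blast
    have "independent_set V E J" unfolding independent_set_def using J by blast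
    then have "card J \<le> a" by (rule aJ)
    moreover have "3 * card D + card {x\<in>D. card {y\<in>D. E x y} = 0} \<le> 2 * card J + card V"
      by (rule count_lemma[OF fin si deg DV dis J(3)])
    ultimately show ?thesis unfolding n_def by linarith
  qed
  have e5: "5 * a = 3 * d" using assms(5) unfolding a_def d_def .
  have k0: "3 * d \<le> 2 * a + n" using key[OF D0(1)] D0(2) by linarith
  have n3a: "n = 3 * a" using k0 na e5 by linarith
  have d9: "9 * d = 5 * n" using n3a e5 by linarith
  have ev: "even n"
  proof -
    have "sig V E = (\<Sum>v\<in>V. 3)" unfolding sig_def using deg by simp
    then have "sig V E = 3 * n" unfolding n_def by simp
    moreover have "even (sig V E)" by (rule sig_even[OF fin si])
    ultimately show ?thesis by simp
  qed
  have dv: "18 dvd n" using ev n3a e5 by presburger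
  have allD: "\<forall>x\<in>D. card {y \<in> D. E x y} = 1" if "max_dissociation_set V E D" for D
  proof -
    have D: "dissociation_set V E D" "card D = d" using that unfolding max_dissociation_set_def d_def by blast+
    have "card {x\<in>D. card {y\<in>D. E x y} = 0} = 0" using key[OF D(1)] D(2) n3a e5 by linarith
    moreover have "finite D" using D(1) fin unfolding dissociation_set_def by (blast intro: finite_subset)
    ultimately have "{x\<in>D. card {y\<in>D. E x y} = 0} = {}" by simp
    moreover have "\<forall>x\<in>D. card {y\<in>D. E x y} \<le> 1" using D(1) unfolding dissociation_set_def by blast
    ultimately show ?thesis by fastforce
  qed
  have "3 * independence_number V E = card V" using n3a unfolding a_def n_def by simp
  then show ?thesis using dv d9 allD unfolding a_def d_def n_def by blast
qed



end
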